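(* Let $n\ge1$. A signed permutation $\pi\in\mathfrak B_n$ is a type B André permutation if and only if every inner node of the tree $T_\pi\in\mathcal{BHR}_n$ is a min-node.
   Context: $\mathfrak B_n$ is the set of signed permutations $\pi=\pi_1\cdots\pi_n$ (words over $\{\pm1,\dots,\pm n\}$ with $|\pi_1|,\dots,|\pi_n|$ a permutation of $[n]$), compared as integers; always set $\pi_0=0$. Trees are rooted binary trees with each child designated left or right. A min–max tree on a totally ordered label set is labeled bijectively so that each node's label is the minimum or maximum of its subtree's labels. A node with a child is inner; an inner node is a min-node (resp. max-node) if its label is the minimum (resp. maximum) of its subtree. An HR-tree is a min–max tree in which every inner node $s$ has a nonempty right subtree containing the maximum label of the subtree of $s$ if $s$ is a min-node, the minimum if $s$ is a max-node. The reading word is the in-order reading $w(T)=w(L)\,\ell_{\mathrm{root}}\,w(R)$. $\mathcal{BHR}_n$ is the set of HR-trees whose label set is $\{0,s_1,\dots,s_n\}$ with $s_i\in\{i,-i\}$, such that $0$ is the first letter of $w(T)$; $T\mapsto w(T)=0\pi_1\cdots\pi_n$ is a bijection $\mathcal{BHR}_n\to\mathfrak B_n$, and $T_\pi$ denotes the tree with $w(T_\pi)=0\pi_1\cdots\pi_n$. For the word $0\pi_1\cdots\pi_n$ and an index $i\in[n]$, the $\pi_i$-factorization is $0\pi_1\cdots\pi_n=w_1w_2\pi_iw_4w_5$ where $w_2$ is the longest factor ending just before $\pi_i$ all of whose letters exceed $\pi_i$ and $w_4$ is the longest factor starting just after $\pi_i$ all of whose letters exceed $\pi_i$. $\pi\in\mathfrak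 B_n$ is a type B André permutation if (i) there is no $i\in\{1,\dots,n-1\}$ with $\pi_{i-1}>\pi_i>\pi_{i+1}$, (ii) $\pi_{n-1}<\pi_n$ (with $\pi_0=0$), and (iii) for every valley $i\in\{1,\dots,n-1\}$ (i.e. $\pi_{i-1}>\pi_i<\pi_{i+1}$), the maximum letter of $w_2$ is smaller than the maximum letter of $w_4$ in the $\pi_i$-factorization. (E.g. for $n=2$ these are $12$, $\bar12$, $\bar21$, where $\bar k=-k$.) *)

theory Defs
  imports Main "HOL-Library.Tree"
begin

definition is_inner :: "int tree \<Rightarrow> bool" where
  "is_inner t \<longleftrightarrow> (case t of Leaf \<Rightarrow> False | Node l a r \<Rightarrow> l \<noteq> Leaf \<or> r \<noteq> Leaf)"

definition is_min_node :: "int tree \<Rightarrow> bool" where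
  "is_min_node t \<longleftrightarrow> is_inner t \<and> (case t of Leaf \<Rightarrow> False | Node l a r \<Rightarrow> a = Min (set_tree t))"

definition is_max_node :: "int tree \<Rightarrow> bool" where
  "is_max_node t \<longleftrightarrow> is_inner t \<and> (case t of Leaf \<Rightarrow> False | Node l a r \<Rightarrow> a = Max (set_tree t))"

definition min_max_tree :: "int tree \<Rightarrow> bool" where
  "min_max_tree T \<longleftrightarrow> distinct (inorder T) \<and>
     (\<forall>l a r. Node l a r \<in> subtrees T \<longrightarrow>
        a = Min (set_tree (Node l a r)) \<or> a = Max (set_tree (Node l a r)))"

definition HR_tree :: "int tree \<Rightarrow> bool" where
  "HR_tree T \<longleftrightarrow> min_max_tree T \<and>
     (\<forall>l a r. Node l a r \<in> subtrees T \<and> is_inner (Node l a r) \<longrightarrow>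
        r \<noteq> Leaf \<and>
        (is_min_node (Node l a r) \<longrightarrow> Max (set_tree (Node l a r)) \<in> set_tree r) \<and>
        (is_max_node (Node l a r) \<longrightarrow> Min (set_tree (Node l a r)) \<in> set_tree r))"

definition BHR :: "nat \<Rightarrow> int tree set" where
  "BHR n = {T. HR_tree T \<and>
     (\<exists>s::nat \<Rightarrow> int. (\<forall>i\<in>{1..n}. s i = int i \<or> s i = - int i) \<and>
         set_tree T = insert 0 (s ` {1..n})) \<and>
     inorder T \<noteq> [] \<and> hd (inorder T) = 0}"

definition signed_perms :: "nat \<Rightarrow> int list set" where
  "signed_perms n = {\<pi>. length \<pi> = n \<and> abs ` set \<pi> = int ` {1..n}}"

definition T_of :: "nat \<Rightarrow> int list \<Rightarrow> int tree" where
  "T_of n \<pi> = (THE T. T \<in> BHR n \<and> inorder T = 0 # \<pi>)"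

(* the letters of the factor w_2 (resp. w_4) in the pi_i-factorization of p = 0 pi_1...pi_n *)
definition w2_set :: "int list \<Rightarrow> nat \<Rightarrow> int set" where
  "w2_set p i = {p ! j | j. j < i \<and> (\<forall>k\<in>{j..<i}. p ! k > p ! i)}"

definition w4_set :: "int list \<Rightarrow> nat \<Rightarrow> int set" where
  "w4_set p i = {p ! j | j. i < j \<and> j < length p \<and> (\<forall>k\<in>{i<..j}. p ! k > p ! i)}"

(* type B Andre permutation; p ! i = pi_i with pi_0 = 0 *)
definition andre_B :: "nat \<Rightarrow> int list \<Rightarrow> bool" where
  "andre_B n \<pi> \<longleftrightarrow> (let p = 0 # \<pi> in
     (\<not> (\<exists>i\<in>{1..n-1}. p ! (i-1) > p ! i \<and> p ! i > p ! (i+1))) \<and>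
     p ! (n-1) < p ! n \<and>
     (\<forall>i\<in>{1..n-1}. p ! (i-1) > p ! i \<and> p ! i < p ! (i+1) \<longrightarrow>
        Max (w2_set p i) < Max (w4_set p i)))"

end

theory Submission
  imports Defs
begin

lemma split_unique:
  "distinct (xs @ y # ys) \<Longrightarrow> xs @ y # ys = xs' @ y # ys' \<Longrightarrow> xs = xs' \<and> ys = ys'"
  by (metis append_Cons_eq_iff distinct.simps(2) distinct_append not_distinct_conv_prefix)

lemma order_contra:
  assumes "distinct w" "w = u1 @ x # v1" "y \<in> set v1" "w = u2 @ y # v2" "x \<in> set v2"
  shows False
proof -
  obtain v1a v1b where v1: "v1 = v1a @ y # v1b" using assms(3) by (meson split_list)
  have "w = (u1 @ x # v1a) @ y # v1b" using assms(2) v1 by simp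
  then have "u2 = u1 @ x # v1a" using split_unique assms by metis
  then show False using assms by auto
qed

lemma HR_Node:
  "HR_tree (Node l a r) \<longleftrightarrow> HR_tree l \<and> HR_tree r \<and> distinct (inorder l @ a # inorder r) \<and>
    (a = Min (set_tree (Node l a r)) \<or> a = Max (set_tree (Node l a r))) \<and>
    (is_inner (Node l a r) \<longrightarrow> r \<noteq> Leaf \<and>
        (is_min_node (Node l a r) \<longrightarrow> Max (set_tree (Node l a r)) \<in> set_tree r) \<and>
        (is_max_node (Node l a r) \<longrightarrow> Min (set_tree (Node l a r)) \<in> set_tree r))"
proof -
  have sub: "\<And>P. (\<forall>l' a' r'. Node l' a' r' \<in> subtrees (Node l a r) \<longrightarrow> P l' a' r') \<longleftrightarrow>
     P l a r \<and> (\<forall>l' a' r'. Node l' a' r' \<in> subtrees l \<longrightarrow> P l' a' r') \<and>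
     (\<forall>l' a' r'. Node l' a' r' \<in> subtrees r \<longrightarrow> P l' a' r')" by auto
  have sub2: "\<And>P Q. (\<forall>l' a' r'. Node l' a' r' \<in> subtrees (Node l a r) \<and> Q l' a' r' \<longrightarrow> P l' a' r') \<longleftrightarrow>
     (Q l a r \<longrightarrow> P l a r) \<and> (\<forall>l' a' r'. Node l' a' r' \<in> subtrees l \<and> Q l' a' r' \<longrightarrow> P l' a' r') \<and>
     (\<forall>l' a' r'. Node l' a' r' \<in> subtrees r \<and> Q l' a' r' \<longrightarrow> P l' a' r')" by auto
  have d: "distinct (inorder (Node l a r)) \<longleftrightarrow> distinct (inorder l) \<and> distinct (inorder r) \<and> distinct (inorder l @ a # inorder r)"
    by auto
  show ?thesis
    unfolding HR_tree_def min_max_tree_def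
    apply (simp only: sub sub2 d)
    apply blast
    done
qed

lemma HR_Leaf: "HR_tree Leaf"
  unfolding HR_tree_def min_max_tree_def is_inner_def by auto

lemma HR_unique: "HR_tree T1 \<Longrightarrow> HR_tree T2 \<Longrightarrow> inorder T1 = inorder T2 \<Longrightarrow> T1 = T2"
proof (induction T1 arbitrary: T2)
  case Leaf thus ?case by simp
next
  case (Node l1 a1 r1)
  then obtain l2 a2 r2 where T2: "T2 = Node l2 a2 r2" by (cases T2) auto
  note H1 = Node.prems(1)[unfolded HR_Node]
  note H2 = Node.prems(2)[unfolded T2 HR_Node]
  have w: "inorder l1 @ a1 # inorder r1 = inorder l2 @ a2 # inorder r2" using Node.prems(3) T2 by simp
  have S: "set_tree (Node l1 a1 r1) = set_tree (Node l2 a2 r2)"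
    by (metis Node.prems(3) T2 set_inorder)
  have "a1 = a2"
  proof (rule ccontr)
    assume ne: "a1 \<noteq> a2"
    then have in1: "is_inner (Node l1 a1 r1)"
      using w by (cases l1; cases r1; cases l2; cases r2) (auto simp: is_inner_def)
    have in2: "is_inner (Node l2 a2 r2)"
      using w ne by (cases l1; cases r1; cases l2; cases r2) (auto simp: is_inner_def)
    have "(a1 = Min (set_tree (Node l1 a1 r1)) \<and> a2 = Max (set_tree (Node l1 a1 r1))) \<or>
          (a1 = Max (set_tree (Node l1 a1 r1)) \<and> a2 = Min (set_tree (Node l1 a1 r1)))"
      using H1 H2 S ne by metis
    then show False
    proof
      assume c: "a1 = Min (set_tree (Node l1 a1 r1)) \<and> a2 = Max (set_tree (Node l1 a1 r1))"
      then have "a2 \<in> set (inorder r1)" using H1 in1 unfolding is_min_node_def by auto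
      moreover have "a1 \<in> set (inorder r2)" using H2 in2 c S unfolding is_max_node_def by auto
      ultimately show False using order_contra[OF _ refl _ w[symmetric]] H1 w by metis
    next
      assume c: "a1 = Max (set_tree (Node l1 a1 r1)) \<and> a2 = Min (set_tree (Node l1 a1 r1))"
      then have "a2 \<in> set (inorder r1)" using H1 in1 unfolding is_max_node_def by auto
      moreover have "a1 \<in> set (inorder r2)" using H2 in2 c S unfolding is_min_node_def by auto
      ultimately show False using order_contra[OF _ refl _ w[symmetric]] H1 w by metis
    qed
  qed
  then have "inorder l1 = inorder l2 \<and> inorder r1 = inorder r2"
    using split_unique[OF _ w[unfolded \<open>a1 = a2\<close>]] H1 \<open>a1 = a2\<close> by simp
  then show ?case using Node.IH H1 H2 T2 \<open>a1 = a2\<close> by auto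
qed


lemma two_order:
  assumes "x \<in> set w" "y \<in> set w" "x \<noteq> y"
  shows "(\<exists>u v. w = u @ x # v \<and> y \<in> set v) \<or> (\<exists>u v. w = u @ y # v \<and> x \<in> set v)"
proof -
  obtain a b where w: "w = a @ x # b" using assms(1) by (meson split_list)
  show ?thesis
  proof (cases "y \<in> set b")
    case True thus ?thesis using w by blast
  next
    case False
    then have "y \<in> set a" using assms w by auto
    then obtain a1 a2 where "a = a1 @ y # a2" by (meson split_list)
    then have "w = a1 @ y # (a2 @ x # b)" using w by simp
    thus ?thesis by (intro disjI2 exI[of _ a1] exI[of _ "a2 @ x # b"]) simp
  qed
qed

lemma build_min:
  assumes "distinct (inorder Tu @ a # inorder Tv)" "HR_tree Tu" "HR_tree Tv"
    "a = Min (set_tree (Node Tu a Tv))" "Max (set_tree (Node Tu a Tv)) \<in> set_tree Tv"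
  shows "HR_tree (Node Tu a Tv)"
proof -
  have "a \<notin> set_tree Tv" using assms(1) by simp
  then have "a \<noteq> Max (set_tree (Node Tu a Tv))" using assms(5) by metis
  moreover have "Tv \<noteq> Leaf" using assms(5) by auto
  ultimately show ?thesis using assms unfolding HR_Node is_max_node_def by auto
qed

lemma build_max:
  assumes "distinct (inorder Tu @ a # inorder Tv)" "HR_tree Tu" "HR_tree Tv"
    "a = Max (set_tree (Node Tu a Tv))" "Min (set_tree (Node Tu a Tv)) \<in> set_tree Tv"
  shows "HR_tree (Node Tu a Tv)"
proof -
  have "a \<notin> set_tree Tv" using assms(1) by simp
  then have "a \<noteq> Min (set_tree (Node Tu a Tv))" using assms(5) by metis
  moreover have "Tv \<noteq> Leaf" using assms(5) by auto
  ultimately show ?thesis using assms unfolding HR_Node is_min_node_def by auto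
qed

lemma HR_exists: "distinct w \<Longrightarrow> \<exists>T. HR_tree T \<and> inorder T = w"
proof (induction w rule: length_induct)
  case (1 w)
  show ?case
  proof (cases "length w \<le> 1")
    case True
    then consider "w = []" | x where "w = [x]"
      by (cases w) auto
    then show ?thesis
    proof cases
      case 1 thus ?thesis using HR_Leaf by auto
    next
      case 2
      have "HR_tree (Node Leaf x Leaf)" unfolding HR_Node using HR_Leaf
        by (auto simp: is_inner_def)
      thus ?thesis using 2 by (intro exI[of _ "Node Leaf x Leaf"]) auto
    qed
  next
    case False
    then obtain x y z where w: "w = x # y # z" by (cases w; cases "tl w") auto
    define m where "m = Min (set w)"
    define M where "M = Max (set w)"
    have mi: "m \<in> set w" "M \<in> set w" unfolding m_def M_def using w by (metis List.finite_set Min_in list.distinct(1) set_empty, metis List.finite_set Max_in list.distinct(1) set_empty)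
    have "m \<noteq> M"
    proof
      assume "m = M"
      then have "x = y" using w unfolding m_def M_def
        by (metis List.finite_set Max_ge Min_le antisym list.set_intros(1) list.set_intros(2) list.set_intros(1))
      thus False using 1(2) w by simp
    qed
    have sub: "\<And>u a v. w = u @ a # v \<Longrightarrow> \<exists>Tu Tv. HR_tree Tu \<and> inorder Tu = u \<and> HR_tree Tv \<and> inorder Tv = v"
    proof -
      fix u a v assume wu: "w = u @ a # v"
      have "\<exists>T. HR_tree T \<and> inorder T = u" using 1 wu by auto
      moreover have "\<exists>T. HR_tree T \<and> inorder T = v" using 1 wu by auto
      ultimately show "\<exists>Tu Tv. HR_tree Tu \<and> inorder Tu = u \<and> HR_tree Tv \<and> inorder Tv = v" by blast
    qed
    from two_order[OF mi \<open>m \<noteq> M\<close>] show ?thesis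
    proof
      assume "\<exists>u v. w = u @ m # v \<and> M \<in> set v"
      then obtain u v where uv: "w = u @ m # v" "M \<in> set v" by blast
      obtain Tu Tv where T: "HR_tree Tu" "inorder Tu = u" "HR_tree Tv" "inorder Tv = v" using sub[OF uv(1)] by blast
      have S: "set_tree (Node Tu m Tv) = set w" using uv T by auto
      have "HR_tree (Node Tu m Tv)"
        using build_min[of Tu m Tv] T uv S 1(2) unfolding m_def M_def by auto
      thus ?thesis using T uv by (intro exI[of _ "Node Tu m Tv"]) auto
    next
      assume "\<exists>u v. w = u @ M # v \<and> m \<in> set v"
      then obtain u v where uv: "w = u @ M # v" "m \<in> set v" by blast
      obtain Tu Tv where T: "HR_tree Tu" "inorder Tu = u" "HR_tree Tv" "inorder Tv = v" using sub[OF uv(1)] by blast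
      have S: "set_tree (Node Tu M Tv) = set w" using uv T by auto
      have "HR_tree (Node Tu M Tv)"
        using build_max[of Tu M Tv] T uv S 1(2) unfolding m_def M_def by auto
      thus ?thesis using T uv by (intro exI[of _ "Node Tu M Tv"]) auto
    qed
  qed
qed


lemma signed_perms_props:
  assumes "\<pi> \<in> signed_perms n"
  shows "distinct (0 # \<pi>)" "inj_on abs (set \<pi>)" "length \<pi> = n"
proof -
  have L: "length \<pi> = n" and A: "abs ` set \<pi> = int ` {1..n}" using assms unfolding signed_perms_def by auto
  have c1: "card (abs ` set \<pi>) = n" using A by (simp add: card_image)
  have c2: "card (abs ` set \<pi>) \<le> card (set \<pi>)" by (rule card_image_le) simp
  have c3: "card (set \<pi>) \<le> length \<pi>" by (rule card_length)
  have "card (set \<pi>) = length \<pi>" using c1 c2 c3 L by linarith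
  then have d: "distinct \<pi>" by (simp add: card_distinct)
  have "card (abs ` set \<pi>) = card (set \<pi>)" using c1 c2 c3 L by linarith
  then show "inj_on abs (set \<pi>)" by (simp add: eq_card_imp_inj_on)
  have "0 \<notin> set \<pi>"
  proof
    assume "0 \<in> set \<pi>"
    then have "(0::int) \<in> int ` {1..n}" using A by force
    thus False by auto
  qed
  then show "distinct (0 # \<pi>)" using d by simp
  show "length \<pi> = n" by (rule L)
qed

lemma T_of_prop:
  assumes "\<pi> \<in> signed_perms n"
  shows "HR_tree (T_of n \<pi>) \<and> inorder (T_of n \<pi>) = 0 # \<pi>"
proof -
  note P = signed_perms_props[OF assms]
  have A: "abs ` set \<pi> = int ` {1..n}" using assms unfolding signed_perms_def by auto
  obtain T where T: "HR_tree T" "inorder T = 0 # \<pi>" using HR_exists[OF P(1)] by blast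
  define s where "s = (\<lambda>i::nat. if int i \<in> set \<pi> then int i else - int i)"
  have s1: "\<forall>i\<in>{1..n}. s i = int i \<or> s i = - int i" unfolding s_def by auto
  have s2: "set \<pi> = s ` {1..n}"
  proof
    show "set \<pi> \<subseteq> s ` {1..n}"
    proof
      fix x assume x: "x \<in> set \<pi>"
      then have "abs x \<in> int ` {1..n}" using A by blast
      then obtain i where i: "i \<in> {1..n}" "abs x = int i" by blast
      show "x \<in> s ` {1..n}"
      proof (cases "x \<ge> 0")
        case True
        then have "x = int i" using i by auto
        then have "s i = x" using x unfolding s_def by auto
        thus ?thesis using i by blast
      next
        case False
        then have xe: "x = - int i" using i by auto
        have "int i \<notin> set \<pi>"
        proof
          assume "int i \<in> set \<pi>"
          moreover have "abs (int i) = abs x" using xe by simp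
          ultimately have "int i = x" using P(2) x by (meson inj_onD)
          thus False using xe i by auto
        qed
        then have "s i = x" using xe unfolding s_def by auto
        thus ?thesis using i by blast
      qed
    qed
  next
    show "s ` {1..n} \<subseteq> set \<pi>"
    proof
      fix y assume "y \<in> s ` {1..n}"
      then obtain i where i: "i \<in> {1..n}" "y = s i" by blast
      then have "int i \<in> abs ` set \<pi>" using A by blast
      then obtain x where x: "x \<in> set \<pi>" "abs x = int i" by (metis imageE)
      then have "x = int i \<or> x = - int i" by auto
      then show "y \<in> set \<pi>" using i x unfolding s_def by (auto split: if_splits)
    qed
  qed
  have st: "set_tree T = insert 0 (s ` {1..n})" using T(2) s2 by (metis set_inorder list.simps(15))
  have TB: "T \<in> BHR n" unfolding BHR_def mem_Collect_eq
    apply (intro conjI exI[of _ s])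
    using T s1 st by simp_all
  have "T_of n \<pi> = T" unfolding T_of_def
  proof (rule the_equality)
    show "T \<in> BHR n \<and> inorder T = 0 # \<pi>" using TB T by simp
  next
    fix T' assume "T' \<in> BHR n \<and> inorder T' = 0 # \<pi>"
    then show "T' = T" using HR_unique T unfolding BHR_def by auto
  qed
  then show ?thesis using T by simp
qed


definition Cw :: "int list \<Rightarrow> bool" where
  "Cw w \<longleftrightarrow> (\<forall>i<length w. w2_set w i \<noteq> {} \<longrightarrow> w4_set w i \<noteq> {} \<and> Max (w2_set w i) < Max (w4_set w i))"

lemma L1: "i < length xs \<Longrightarrow> w2_set (xs @ m # ys) i = w2_set xs i"
proof -
  assume i: "i < length xs"
  have e: "\<And>k. k \<le> i \<Longrightarrow> (xs @ m # ys) ! k = xs ! k" using i by (simp add: nth_append)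
  have P: "\<And>j. (j < i \<and> (\<forall>k\<in>{j..<i}. (xs @ m # ys) ! k > (xs @ m # ys) ! i)) \<longleftrightarrow>
                 (j < i \<and> (\<forall>k\<in>{j..<i}. xs ! k > xs ! i))" using e by auto
  show ?thesis unfolding w2_set_def
  proof (intro set_eqI iffI)
    fix x assume "x \<in> {(xs @ m # ys) ! j |j. j < i \<and> (\<forall>k\<in>{j..<i}. (xs @ m # ys) ! i < (xs @ m # ys) ! k)}"
    then obtain j where j: "x = (xs @ m # ys) ! j" "j < i \<and> (\<forall>k\<in>{j..<i}. (xs @ m # ys) ! i < (xs @ m # ys) ! k)" by blast
    then show "x \<in> {xs ! j |j. j < i \<and> (\<forall>k\<in>{j..<i}. xs ! i < xs ! k)}" using P[of j] e[of j] by auto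
  next
    fix x assume "x \<in> {xs ! j |j. j < i \<and> (\<forall>k\<in>{j..<i}. xs ! i < xs ! k)}"
    then obtain j where j: "x = xs ! j" "j < i \<and> (\<forall>k\<in>{j..<i}. xs ! i < xs ! k)" by blast
    have c: "j < i \<and> (\<forall>k\<in>{j..<i}. (xs @ m # ys) ! i < (xs @ m # ys) ! k)" using P[of j] j by simp
    have "x = (xs @ m # ys) ! j" using j e[of j] by simp
    with c show "x \<in> {(xs @ m # ys) ! j |j. j < i \<and> (\<forall>k\<in>{j..<i}. (xs @ m # ys) ! i < (xs @ m # ys) ! k)}"
      by blast
  qed
qed

lemma L2: "i < length xs \<Longrightarrow> m < xs ! i \<Longrightarrow> w4_set (xs @ m # ys) i = w4_set xs i"
proof -
  assume i: "i < length xs" and mi: "m < xs ! i"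
  let ?w = "xs @ m # ys"
  have wi: "?w ! i = xs ! i" using i by (simp add: nth_append)
  have P: "\<And>j. (i < j \<and> j < length ?w \<and> (\<forall>k\<in>{i<..j}. ?w ! k > ?w ! i)) \<longleftrightarrow>
                 (i < j \<and> j < length xs \<and> (\<forall>k\<in>{i<..j}. xs ! k > xs ! i))"
  proof
    fix j assume a: "i < j \<and> j < length ?w \<and> (\<forall>k\<in>{i<..j}. ?w ! k > ?w ! i)"
    have "j < length xs"
    proof (rule ccontr)
      assume "\<not> j < length xs"
      then have "length xs \<in> {i<..j}" using i by auto
      then have "?w ! length xs > ?w ! i" using a by blast
      then show False using wi mi by simp
    qed
    then show "i < j \<and> j < length xs \<and> (\<forall>k\<in>{i<..j}. xs ! k > xs ! i)" using a wi by (auto simp: nth_append)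
  next
    fix j assume a: "i < j \<and> j < length xs \<and> (\<forall>k\<in>{i<..j}. xs ! k > xs ! i)"
    then show "i < j \<and> j < length ?w \<and> (\<forall>k\<in>{i<..j}. ?w ! k > ?w ! i)" using wi by (auto simp: nth_append)
  qed
  have e: "\<And>j. j < length xs \<Longrightarrow> ?w ! j = xs ! j" by (simp add: nth_append)
  show ?thesis unfolding w4_set_def
  proof (intro set_eqI iffI)
    fix x assume "x \<in> {?w ! j |j. i < j \<and> j < length ?w \<and> (\<forall>k\<in>{i<..j}. ?w ! i < ?w ! k)}"
    then obtain j where j: "x = ?w ! j" "i < j \<and> j < length ?w \<and> (\<forall>k\<in>{i<..j}. ?w ! i < ?w ! k)" by blast
    then show "x \<in> {xs ! j |j. i < j \<and> j < length xs \<and> (\<forall>k\<in>{i<..j}. xs ! i < xs ! k)}" using P[of j] e[of j] by auto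
  next
    fix x assume "x \<in> {xs ! j |j. i < j \<and> j < length xs \<and> (\<forall>k\<in>{i<..j}. xs ! i < xs ! k)}"
    then obtain j where j: "x = xs ! j" "i < j \<and> j < length xs \<and> (\<forall>k\<in>{i<..j}. xs ! i < xs ! k)" by blast
    have c: "i < j \<and> j < length ?w \<and> (\<forall>k\<in>{i<..j}. ?w ! i < ?w ! k)" using P[of j] j by simp
    have "x = ?w ! j" using j e[of j] by simp
    with c show "x \<in> {?w ! j |j. i < j \<and> j < length ?w \<and> (\<forall>k\<in>{i<..j}. ?w ! i < ?w ! k)}" by blast
  qed
qed

lemma L3: "\<forall>x\<in>set xs. m < x \<Longrightarrow> w2_set (xs @ m # ys) (length xs) = set xs"
proof -
  assume A: "\<forall>x\<in>set xs. m < x"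
  let ?w = "xs @ m # ys"
  have wi: "?w ! length xs = m" by simp
  have e: "\<And>j. j < length xs \<Longrightarrow> ?w ! j = xs ! j" by (simp add: nth_append)
  show ?thesis unfolding w2_set_def
  proof (intro set_eqI iffI)
    fix x assume "x \<in> {?w ! j |j. j < length xs \<and> (\<forall>k\<in>{j..<length xs}. ?w ! length xs < ?w ! k)}"
    then obtain j where "x = ?w ! j" "j < length xs" by blast
    then show "x \<in> set xs" using e by simp
  next
    fix x assume "x \<in> set xs"
    then obtain j where j: "j < length xs" "x = xs ! j" by (metis in_set_conv_nth)
    have "\<forall>k\<in>{j..<length xs}. ?w ! length xs < ?w ! k" using A e by auto
    moreover have "x = ?w ! j" using j e by simp
    ultimately show "x \<in> {?w ! j |j. j < length xs \<and> (\<forall>k\<in>{j..<length xs}. ?w ! length xs < ?w ! k)}"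
      using j by blast
  qed
qed

lemma L4: "\<forall>x\<in>set ys. m < x \<Longrightarrow> w4_set (xs @ m # ys) (length xs) = set ys"
proof -
  assume A: "\<forall>x\<in>set ys. m < x"
  let ?w = "xs @ m # ys"
  have wi: "?w ! length xs = m" by simp
  have e: "\<And>j. j < length ys \<Longrightarrow> ?w ! (Suc (length xs + j)) = ys ! j" by (simp add: nth_append)
  show ?thesis unfolding w4_set_def
  proof (intro set_eqI iffI)
    fix x assume "x \<in> {?w ! j |j. length xs < j \<and> j < length ?w \<and> (\<forall>k\<in>{length xs<..j}. ?w ! length xs < ?w ! k)}"
    then obtain j where j: "x = ?w ! j" "length xs < j" "j < length ?w" by blast
    then have "x = ys ! (j - Suc (length xs))" "j - Suc (length xs) < length ys"
      using e[of "j - Suc (length xs)"] by auto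
    then show "x \<in> set ys" by simp
  next
    fix x assume "x \<in> set ys"
    then obtain j where j: "j < length ys" "x = ys ! j" by (metis in_set_conv_nth)
    have "\<forall>k\<in>{length xs<..Suc (length xs + j)}. ?w ! length xs < ?w ! k"
    proof
      fix k assume "k \<in> {length xs<..Suc (length xs + j)}"
      then have "k - Suc (length xs) < length ys" "k = Suc (length xs + (k - Suc (length xs)))" using j by auto
      then show "?w ! length xs < ?w ! k" using A e by (metis nth_mem wi)
    qed
    then show "x \<in> {?w ! j |j. length xs < j \<and> j < length ?w \<and> (\<forall>k\<in>{length xs<..j}. ?w ! length xs < ?w ! k)}"
      using j e by (intro CollectI exI[of _ "Suc (length xs + j)"]) auto
  qed
qed

lemma L5: "i < length ys \<Longrightarrow> m < ys ! i \<Longrightarrow> w2_set (xs @ m # ys) (Suc (length xs + i)) = w2_set ys i"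
proof -
  assume i: "i < length ys" and mi: "m < ys ! i"
  let ?w = "xs @ m # ys"
  let ?L = "Suc (length xs)"
  have e: "\<And>j. ?w ! (?L + j) = ys ! j" by (simp add: nth_append)
  have wi: "?w ! (Suc (length xs + i)) = ys ! i" using e[of i] by simp
  show ?thesis unfolding w2_set_def
  proof (intro set_eqI iffI)
    fix x assume "x \<in> {?w ! j |j. j < Suc (length xs + i) \<and> (\<forall>k\<in>{j..<Suc (length xs + i)}. ?w ! Suc (length xs + i) < ?w ! k)}"
    then obtain j where j: "x = ?w ! j" "j < Suc (length xs + i)" "\<forall>k\<in>{j..<Suc (length xs + i)}. ?w ! Suc (length xs + i) < ?w ! k" by blast
    have "j \<ge> ?L"
    proof (rule ccontr)
      assume "\<not> j \<ge> ?L"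
      then have "length xs \<in> {j..<Suc (length xs + i)}" by auto
      then have "?w ! Suc (length xs + i) < ?w ! length xs" using j by blast
      then show False using wi mi by simp
    qed
    then obtain j' where j': "j = ?L + j'" by (metis le_add_diff_inverse)
    have "\<forall>k\<in>{j'..<i}. ys ! i < ys ! k"
    proof
      fix k assume "k \<in> {j'..<i}"
      then have "?L + k \<in> {j..<Suc (length xs + i)}" using j' by auto
      then have "?w ! Suc (length xs + i) < ?w ! (?L + k)" using j(3) by blast
      then show "ys ! i < ys ! k" using wi e[of k] by simp
    qed
    then show "x \<in> {ys ! j |j. j < i \<and> (\<forall>k\<in>{j..<i}. ys ! i < ys ! k)}"
      using j j' e[of j'] by auto
  next
    fix x assume "x \<in> {ys ! j |j. j < i \<and> (\<forall>k\<in>{j..<i}. ys ! i < ys ! k)}"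
    then obtain j where j: "x = ys ! j" "j < i" "\<forall>k\<in>{j..<i}. ys ! i < ys ! k" by blast
    have "\<forall>k\<in>{?L + j..<Suc (length xs + i)}. ?w ! Suc (length xs + i) < ?w ! k"
    proof
      fix k assume "k \<in> {?L + j..<Suc (length xs + i)}"
      then have "k - ?L \<in> {j..<i}" "k = ?L + (k - ?L)" by auto
      then have "ys ! i < ys ! (k - ?L)" using j(3) by blast
      then have "?w ! Suc (length xs + i) < ?w ! (?L + (k - ?L))" using wi e[of "k - ?L"] by simp
      then show "?w ! Suc (length xs + i) < ?w ! k" using \<open>k = ?L + (k - ?L)\<close> by simp
    qed
    then show "x \<in> {?w ! j |j. j < Suc (length xs + i) \<and> (\<forall>k\<in>{j..<Suc (length xs + i)}. ?w ! Suc (length xs + i) < ?w ! k)}"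
      using j e[of j] by (intro CollectI exI[of _ "?L + j"]) auto
  qed
qed

lemma L6: "i < length ys \<Longrightarrow> w4_set (xs @ m # ys) (Suc (length xs + i)) = w4_set ys i"
proof -
  assume i: "i < length ys"
  let ?w = "xs @ m # ys"
  let ?L = "Suc (length xs)"
  have e: "\<And>j. ?w ! (?L + j) = ys ! j" by (simp add: nth_append)
  have wi: "?w ! (Suc (length xs + i)) = ys ! i" using e[of i] by simp
  show ?thesis unfolding w4_set_def
  proof (intro set_eqI iffI)
    fix x assume "x \<in> {?w ! j |j. Suc (length xs + i) < j \<and> j < length ?w \<and> (\<forall>k\<in>{Suc (length xs + i)<..j}. ?w ! Suc (length xs + i) < ?w ! k)}"
    then obtain j where j: "x = ?w ! j" "Suc (length xs + i) < j" "j < length ?w" "\<forall>k\<in>{Suc (length xs + i)<..j}. ?w ! Suc (length xs + i) < ?w ! k" by blast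
    define j' where "j' = j - ?L"
    have j': "j = ?L + j'" using j(2) unfolding j'_def by simp
    have "\<forall>k\<in>{i<..j'}. ys ! i < ys ! k"
    proof
      fix k assume "k \<in> {i<..j'}"
      then have "?L + k \<in> {Suc (length xs + i)<..j}" using j' by auto
      then have "?w ! Suc (length xs + i) < ?w ! (?L + k)" using j(4) by blast
      then show "ys ! i < ys ! k" using wi e[of k] by simp
    qed
    then show "x \<in> {ys ! j |j. i < j \<and> j < length ys \<and> (\<forall>k\<in>{i<..j}. ys ! i < ys ! k)}"
      using j j' e[of j'] by auto
  next
    fix x assume "x \<in> {ys ! j |j. i < j \<and> j < length ys \<and> (\<forall>k\<in>{i<..j}. ys ! i < ys ! k)}"
    then obtain j where j: "x = ys ! j" "i < j" "j < length ys" "\<forall>k\<in>{i<..j}. ys ! i < ys ! k" by blast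
    have "\<forall>k\<in>{Suc (length xs + i)<..?L + j}. ?w ! Suc (length xs + i) < ?w ! k"
    proof
      fix k assume "k \<in> {Suc (length xs + i)<..?L + j}"
      then have "k - ?L \<in> {i<..j}" "k = ?L + (k - ?L)" by auto
      then have "ys ! i < ys ! (k - ?L)" using j(4) by blast
      then have "?w ! Suc (length xs + i) < ?w ! (?L + (k - ?L))" using wi e[of "k - ?L"] by simp
      then show "?w ! Suc (length xs + i) < ?w ! k" using \<open>k = ?L + (k - ?L)\<close> by simp
    qed
    then show "x \<in> {?w ! j |j. Suc (length xs + i) < j \<and> j < length ?w \<and> (\<forall>k\<in>{Suc (length xs + i)<..j}. ?w ! Suc (length xs + i) < ?w ! k)}"
      using j e[of j] by (intro CollectI exI[of _ "?L + j"]) auto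
  qed
qed


lemma all_split3: "(\<forall>i<Suc (a+b). P i) \<longleftrightarrow> (\<forall>i<a. P i) \<and> P a \<and> (\<forall>i<b. P (Suc (a+i)))"
proof
  assume "\<forall>i<Suc (a+b). P i" thus "(\<forall>i<a. P i) \<and> P a \<and> (\<forall>i<b. P (Suc (a+i)))" by auto
next
  assume A: "(\<forall>i<a. P i) \<and> P a \<and> (\<forall>i<b. P (Suc (a+i)))"
  show "\<forall>i<Suc (a+b). P i"
  proof (intro allI impI)
    fix i assume i: "i < Suc (a+b)"
    consider "i < a" | "i = a" | "a < i" by linarith
    then show "P i"
    proof cases
      case 3
      then have "i = Suc (a + (i - Suc a))" "i - Suc a < b" using i by auto
      then show ?thesis using A by metis
    qed (use A in auto)
  qed
qed

lemma Cw_split: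
  assumes d: "distinct (u @ m # v)" and mn: "\<forall>x\<in>set (u @ m # v). m \<le> x"
  shows "Cw (u @ m # v) \<longleftrightarrow> Cw u \<and> Cw v \<and> (u \<noteq> [] \<longrightarrow> v \<noteq> [] \<and> Max (set u) < Max (set v))"
proof -
  let ?w = "u @ m # v"
  let ?c = "\<lambda>w i. w2_set w i \<noteq> {} \<longrightarrow> w4_set w i \<noteq> {} \<and> Max (w2_set w i) < Max (w4_set w i)"
  have mu: "\<forall>x\<in>set u. m < x" using d mn by force
  have mv: "\<forall>x\<in>set v. m < x" using d mn by force
  have cu: "\<And>i. i < length u \<Longrightarrow> ?c ?w i = ?c u i"
  proof -
    fix i assume i: "i < length u"
    then have "m < u ! i" using mu by simp
    then show "?c ?w i = ?c u i" using L1[OF i] L2[OF i] by simp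
  qed
  have cv: "\<And>i. i < length v \<Longrightarrow> ?c ?w (Suc (length u + i)) = ?c v i"
  proof -
    fix i assume i: "i < length v"
    then have "m < v ! i" using mv by simp
    then show "?c ?w (Suc (length u + i)) = ?c v i" using L5[OF i] L6[OF i] by simp
  qed
  have cm: "?c ?w (length u) = (u \<noteq> [] \<longrightarrow> v \<noteq> [] \<and> Max (set u) < Max (set v))"
    using L3[OF mu, of v] L4[OF mv, of u] by simp
  have "Cw ?w \<longleftrightarrow> (\<forall>i<Suc (length u + length v). ?c ?w i)" unfolding Cw_def by simp
  also have "\<dots> \<longleftrightarrow> (\<forall>i<length u. ?c ?w i) \<and> ?c ?w (length u) \<and> (\<forall>i<length v. ?c ?w (Suc (length u + i)))"
    by (rule all_split3)
  also have "\<dots> \<longleftrightarrow> Cw u \<and> (u \<noteq> [] \<longrightarrow> v \<noteq> [] \<and> Max (set u) < Max (set v)) \<and> Cw v"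
    unfolding Cw_def cm using cu cv by auto
  finally show ?thesis by blast
qed


lemma tree_C: "HR_tree T \<Longrightarrow> (\<forall>t\<in>subtrees T. is_inner t \<longrightarrow> is_min_node t) \<longleftrightarrow> Cw (inorder T)"
proof (induction T)
  case Leaf thus ?case by (simp add: is_inner_def Cw_def)
next
  case (Node l a r)
  let ?T = "Node l a r"
  let ?S = "set_tree ?T"
  let ?u = "inorder l" and ?v = "inorder r"
  note H = Node.prems[unfolded HR_Node]
  have IHl: "(\<forall>t\<in>subtrees l. is_inner t \<longrightarrow> is_min_node t) \<longleftrightarrow> Cw ?u" using Node.IH(1) H by blast
  have IHr: "(\<forall>t\<in>subtrees r. is_inner t \<longrightarrow> is_min_node t) \<longleftrightarrow> Cw ?v" using Node.IH(2) H by blast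
  have AM: "(\<forall>t\<in>subtrees ?T. is_inner t \<longrightarrow> is_min_node t) \<longleftrightarrow>
      (is_inner ?T \<longrightarrow> is_min_node ?T) \<and> (\<forall>t\<in>subtrees l. is_inner t \<longrightarrow> is_min_node t) \<and>
      (\<forall>t\<in>subtrees r. is_inner t \<longrightarrow> is_min_node t)" by auto
  have d: "distinct (?u @ a # ?v)" using H by blast
  have fin: "finite ?S" by simp
  have Sw: "?S = set (?u @ a # ?v)" by simp
  show ?case
  proof (cases "is_inner ?T")
    case False
    then have lr: "l = Leaf" "r = Leaf" by (auto simp: is_inner_def)
    have "Cw [a]" using Cw_split[of "[]" a "[]"] by (simp add: Cw_def)
    then show ?thesis using AM False lr by (simp add: is_inner_def)
  next
    case inner: True
    show ?thesis
    proof
      assume LHS: "\<forall>t\<in>subtrees ?T. is_inner t \<longrightarrow> is_min_node t"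
      then have "is_min_node ?T" using inner AM by blast
      then have aMin: "a = Min ?S" unfolding is_min_node_def by simp
      have mn: "\<forall>x\<in>set (?u @ a # ?v). a \<le> x" using aMin fin Sw by (metis Min_le)
      have "r \<noteq> Leaf" "Max ?S \<in> set ?v" using H inner \<open>is_min_node ?T\<close> by auto
      then have vne: "?v \<noteq> []" by auto
      have "?u \<noteq> [] \<longrightarrow> Max (set ?u) < Max (set ?v)"
      proof
        assume une: "?u \<noteq> []"
        have m1: "Max (set ?u) \<in> set ?u" using une by simp
        have m2: "Max (set ?v) \<in> set ?v" using vne by simp
        have "Max (set ?u) \<le> Max ?S" using m1 fin Sw by (metis Max_ge UnI1 set_append)
        also have "Max ?S \<le> Max (set ?v)" using \<open>Max ?S \<in> set ?v\<close> by simp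
        finally have le: "Max (set ?u) \<le> Max (set ?v)" .
        have "Max (set ?u) \<noteq> Max (set ?v)" using m1 m2 d by auto
        then show "Max (set ?u) < Max (set ?v)" using le by simp
      qed
      then show "Cw (inorder ?T)" using Cw_split[OF d mn] IHl IHr LHS AM vne by simp
    next
      assume C: "Cw (inorder ?T)"
      have aMin: "a = Min ?S"
      proof (rule ccontr)
        assume ne: "a \<noteq> Min ?S"
        then have aMax: "a = Max ?S" using H by blast
        then have "is_max_node ?T" using inner unfolding is_max_node_def by simp
        then have "Min ?S \<in> set ?v" using H inner by auto
        then obtain v1 v2 where v: "?v = v1 @ Min ?S # v2" by (meson split_list)
        have w: "inorder ?T = (?u @ a # v1) @ Min ?S # v2" using v by simp
        have d2: "distinct ((?u @ a # v1) @ Min ?S # v2)" using d v by simp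
        have mn2: "\<forall>x\<in>set ((?u @ a # v1) @ Min ?S # v2). Min ?S \<le> x"
          using fin w by (metis Min_le set_inorder)
        have "v2 \<noteq> [] \<and> Max (set (?u @ a # v1)) < Max (set v2)"
          using C[unfolded w] Cw_split[OF d2 mn2] by simp
        then have v2ne: "v2 \<noteq> []" and lt: "Max (set (?u @ a # v1)) < Max (set v2)" by auto
        have "a \<le> Max (set (?u @ a # v1))" by simp
        moreover have "Max (set v2) \<in> ?S" using v2ne v by (metis Max_in List.finite_set set_empty Sw set_append UnI2 list.set_intros(2) UnI2)
        then have "Max (set v2) \<le> Max ?S" using fin by simp
        ultimately show False using lt aMax by simp
      qed
      then have mn: "\<forall>x\<in>set (?u @ a # ?v). a \<le> x" using fin Sw by (metis Min_le)
      have "is_min_node ?T" using inner aMin unfolding is_min_node_def by simp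
      moreover have "Cw ?u" "Cw ?v" using C Cw_split[OF d mn] by auto
      ultimately show "\<forall>t\<in>subtrees ?T. is_inner t \<longrightarrow> is_min_node t" using AM IHl IHr by blast
    qed
  qed
qed

lemma w2_ne: "i < length p \<Longrightarrow> w2_set p i \<noteq> {} \<longleftrightarrow> (0 < i \<and> p ! (i - 1) > p ! i)"
proof
  assume "w2_set p i \<noteq> {}"
  then obtain j where j: "j < i" "\<forall>k\<in>{j..<i}. p ! k > p ! i" unfolding w2_set_def by blast
  then have "i - 1 \<in> {j..<i}" by auto
  then show "0 < i \<and> p ! (i - 1) > p ! i" using j by auto
next
  assume a: "0 < i \<and> p ! (i - 1) > p ! i"
  then have "{i - 1..<i} = {i - 1}" by auto
  then have "\<forall>k\<in>{i - 1..<i}. p ! k > p ! i" using a by simp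
  then have "p ! (i - 1) \<in> w2_set p i" unfolding w2_set_def using a by (intro CollectI exI[of _ "i - 1"]) auto
  then show "w2_set p i \<noteq> {}" by blast
qed

lemma w4_ne: "w4_set p i \<noteq> {} \<longleftrightarrow> (Suc i < length p \<and> p ! Suc i > p ! i)"
proof
  assume "w4_set p i \<noteq> {}"
  then obtain j where j: "i < j" "j < length p" "\<forall>k\<in>{i<..j}. p ! k > p ! i" unfolding w4_set_def by blast
  then have "Suc i \<in> {i<..j}" by auto
  then show "Suc i < length p \<and> p ! Suc i > p ! i" using j by auto
next
  assume a: "Suc i < length p \<and> p ! Suc i > p ! i"
  have "{i<..Suc i} = {Suc i}" by auto
  then have "\<forall>k\<in>{i<..Suc i}. p ! k > p ! i" using a by simp
  then have "p ! Suc i \<in> w4_set p i" unfolding w4_set_def using a by (intro CollectI exI[of _ "Suc i"]) auto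
  then show "w4_set p i \<noteq> {}" by blast
qed

lemma andre_Cw:
  assumes n: "n \<ge> 1" and len: "length \<pi> = n" and d: "distinct (0 # \<pi>)"
  shows "andre_B n \<pi> \<longleftrightarrow> Cw (0 # \<pi>)"
proof -
  define p where "p = 0 # \<pi>"
  have lp: "length p = Suc n" using len p_def by simp
  have dp: "\<And>i j. i < Suc n \<Longrightarrow> j < Suc n \<Longrightarrow> i \<noteq> j \<Longrightarrow> p ! i \<noteq> p ! j"
    using d lp unfolding p_def by (metis nth_eq_iff_index_eq)
  have A: "andre_B n \<pi> \<longleftrightarrow>
     (\<not> (\<exists>i\<in>{1..n-1}. p ! (i-1) > p ! i \<and> p ! i > p ! (i+1))) \<and>
     p ! (n-1) < p ! n \<and>
     (\<forall>i\<in>{1..n-1}. p ! (i-1) > p ! i \<and> p ! i < p ! (i+1) \<longrightarrow>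
        Max (w2_set p i) < Max (w4_set p i))" unfolding andre_B_def p_def Let_def by simp
  have C: "Cw (0 # \<pi>) \<longleftrightarrow> (\<forall>i<Suc n. w2_set p i \<noteq> {} \<longrightarrow> w4_set p i \<noteq> {} \<and> Max (w2_set p i) < Max (w4_set p i))"
    unfolding Cw_def p_def using len by simp
  show ?thesis
  proof
    assume "andre_B n \<pi>"
    then have a1: "\<not> (\<exists>i\<in>{1..n-1}. p ! (i-1) > p ! i \<and> p ! i > p ! (i+1))"
      and a2: "p ! (n-1) < p ! n"
      and a3: "\<forall>i\<in>{1..n-1}. p ! (i-1) > p ! i \<and> p ! i < p ! (i+1) \<longrightarrow> Max (w2_set p i) < Max (w4_set p i)"
      using A by blast+
    show "Cw (0 # \<pi>)" unfolding C
    proof (intro allI impI)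
      fix i assume i: "i < Suc n" and w2: "w2_set p i \<noteq> {}"
      then have i0: "0 < i" and de: "p ! (i - 1) > p ! i" using w2_ne[of i p] lp by auto
      have "i \<noteq> n" using de a2 by auto
      then have iI: "i \<in> {1..n-1}" using i i0 by auto
      then have "\<not> p ! i > p ! (i+1)" using a1 de by blast
      moreover have "p ! i \<noteq> p ! (i+1)" using dp iI by auto
      ultimately have up: "p ! i < p ! Suc i" by simp
      then have "w4_set p i \<noteq> {}" using w4_ne[of p i] lp iI by auto
      moreover have "Max (w2_set p i) < Max (w4_set p i)" using a3 iI de up by simp
      ultimately show "w4_set p i \<noteq> {} \<and> Max (w2_set p i) < Max (w4_set p i)" by blast
    qed
  next
    assume "Cw (0 # \<pi>)"
    then have c: "\<And>i. i < Suc n \<Longrightarrow> w2_set p i \<noteq> {} \<Longrightarrow> w4_set p i \<noteq> {} \<and> Max (w2_set p i) < Max (w4_set p i)"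
      unfolding C by blast
    have a1: "\<not> (\<exists>i\<in>{1..n-1}. p ! (i-1) > p ! i \<and> p ! i > p ! (i+1))"
    proof
      assume "\<exists>i\<in>{1..n-1}. p ! (i-1) > p ! i \<and> p ! i > p ! (i+1)"
      then obtain i where i: "i \<in> {1..n-1}" "p ! (i-1) > p ! i" "p ! i > p ! (i+1)" by blast
      have il: "i < length p" using i(1) lp by auto
      then have "w2_set p i \<noteq> {}" using w2_ne[OF il] i by auto
      then have "w4_set p i \<noteq> {}" using c il lp by auto
      then show False using w4_ne[of p i] i by auto
    qed
    have a2: "p ! (n-1) < p ! n"
    proof (rule ccontr)
      assume "\<not> p ! (n-1) < p ! n"
      moreover have "p ! (n-1) \<noteq> p ! n" using dp n by auto
      ultimately have "p ! (n-1) > p ! n" by simp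
      then have "w2_set p n \<noteq> {}" using w2_ne[of n p] lp n by auto
      then have "w4_set p n \<noteq> {}" using c by auto
      then show False using w4_ne[of p n] lp by auto
    qed
    have a3: "\<forall>i\<in>{1..n-1}. p ! (i-1) > p ! i \<and> p ! i < p ! (i+1) \<longrightarrow> Max (w2_set p i) < Max (w4_set p i)"
    proof (intro ballI impI)
      fix i assume i: "i \<in> {1..n-1}" and v: "p ! (i-1) > p ! i \<and> p ! i < p ! (i+1)"
      have il: "i < length p" using i(1) lp by auto
      then have "w2_set p i \<noteq> {}" using w2_ne[OF il] i v by auto
      then show "Max (w2_set p i) < Max (w4_set p i)" using c il lp by auto
    qed
    show "andre_B n \<pi>" using A a1 a2 a3 by blast
  qed
qed

theorem mainTheorem8:
  fixes n :: nat and \<pi> :: "int list"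
  assumes "n \<ge> 1" and "\<pi> \<in> signed_perms n"
  shows "andre_B n \<pi> \<longleftrightarrow>
    (\<forall>t \<in> subtrees (T_of n \<pi>). is_inner t \<longrightarrow> is_min_node t)"
proof -
  note P = signed_perms_props[OF assms(2)]
  note T = T_of_prop[OF assms(2)]
  show ?thesis using tree_C[of "T_of n \<pi>"] T andre_Cw[OF assms(1) P(3) P(1)] by simp
qed


end
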